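(* Let $B,C$ be finite subsets of $I$. The following are equivalent: (1) there is a nonempty $A\in\mathcal{P}_{\mathrm{fci}}(I)$ with $l(A)=B$ and $r(A)=C$; (2) $B\neq\emptyset$, $\min(B\cup C)\subseteq B$, and one of the following holds: (a) $\max(B\cup C)\subseteq C$ and $\mathrm{ips}(B\cup C,C\setminus B)=B\setminus C$; (b) $\max(B\cup C)\subseteq B\setminus C$ and $\mathrm{ips}(B\cup C,C\setminus B)\cup\max(B\cup C)=B\setminus C$.
   Context: Let $I$ be a dense linear order with left endpoint $0$ and no right endpoint. Let $\mathcal{P}_{\mathrm{fci}}(I)$ be the set of finite unions of closed intervals $[i,j]$, $[i,+\infty)$, $(-\infty,j]$ of $I$. For $A\in\mathcal{P}_{\mathrm{fci}}(I)$, $l(A)$ and $r(A)$ are the sets of left and right endpoints of $A$. Left endpoints are the minima of the maximal closed intervals composing $A$, and right endpoints are the maxima of the bounded ones. For a nonempty finite set $X$, $\min(X)$ and $\max(X)$ are the singletons of its least and greatest element. For finite $X,Y$, $\mathrm{ips}(X,Y)=\{i\in X: s_X(i)\in Y\}$, where $s_X$ is the successor function of $X$ with the induced order. *)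

theory Defs
  imports Main
begin

text \<open>The ambient order I is a type of sort {dense_linorder, order_bot, no_top}:
a dense linear order with least element (bot, playing the role of 0) and no
greatest element.\<close>

definition cinterval :: "'a::linorder set \<Rightarrow> bool" where
  "cinterval K \<longleftrightarrow> (\<exists>i j. i \<le> j \<and> K = {i..j}) \<or> (\<exists>i. K = {i..}) \<or> (\<exists>j. K = {..j})"

definition fci :: "'a::linorder set \<Rightarrow> bool" where
  "fci A \<longleftrightarrow> (\<exists>F. finite F \<and> (\<forall>K\<in>F. cinterval K) \<and> A = \<Union>F)"

definition maxci :: "'a::linorder set \<Rightarrow> 'a set \<Rightarrow> bool" where
  "maxci A K \<longleftrightarrow> cinterval K \<and> K \<subseteq> A \<and>
     (\<forall>K'. cinterval K' \<and> K \<subseteq> K' \<and> K' \<subseteq> A \<longrightarrow> K' = K)"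

definition lend :: "'a::linorder set \<Rightarrow> 'a set" where
  "lend A = {i. \<exists>K. maxci A K \<and> i \<in> K \<and> (\<forall>x\<in>K. i \<le> x)}"

definition rend :: "'a::linorder set \<Rightarrow> 'a set" where
  "rend A = {j. \<exists>K. maxci A K \<and> j \<in> K \<and> (\<forall>x\<in>K. x \<le> j)}"

definition succ_in :: "'a::linorder set \<Rightarrow> 'a \<Rightarrow> 'a \<Rightarrow> bool" where
  "succ_in X i j \<longleftrightarrow> i \<in> X \<and> j \<in> X \<and> i < j \<and> (\<forall>k\<in>X. i < k \<longrightarrow> j \<le> k)"

definition ips :: "'a::linorder set \<Rightarrow> 'a set \<Rightarrow> 'a set" where
  "ips X Y = {i\<in>X. \<exists>j. succ_in X i j \<and> j \<in> Y}"

end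

theory Submission imports Defs begin

lemma cinterval_alt:
  fixes K :: "'a::{linorder, order_bot} set"
  shows "cinterval K \<longleftrightarrow> (\<exists>i j. i \<le> j \<and> K = {i..j}) \<or> (\<exists>i. K = {i..})"
proof -
  have e: "{..j} = {bot..j}" for j :: 'a by auto
  show ?thesis unfolding cinterval_def
  proof
    assume "(\<exists>i j. i \<le> j \<and> K = {i..j}) \<or> (\<exists>i. K = {i..}) \<or> (\<exists>j. K = {..j})"
    thus "(\<exists>i j. i \<le> j \<and> K = {i..j}) \<or> (\<exists>i. K = {i..})" using e bot_least by metis
  qed blast
qed

lemma cinterval_convex:
  fixes K :: "'a::{linorder, order_bot} set"
  assumes "cinterval K" "x \<in> K" "y \<in> K"
  shows "{x..y} \<subseteq> K"
  using assms unfolding cinterval_def by auto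

lemma cinterval_min:
  fixes K :: "'a::{linorder, order_bot} set"
  assumes "cinterval K"
  shows "\<exists>e\<in>K. \<forall>x\<in>K. e \<le> x"
  using assms unfolding cinterval_alt by auto

lemma finite_sub1:
  assumes "\<forall>a\<in>S. \<forall>b\<in>S. a = b"
  shows "finite S"
proof (cases "S = {}")
  case True thus ?thesis by simp
next
  case False
  then obtain a where "a \<in> S" by blast
  hence "S \<subseteq> {a}" using assms by blast
  thus ?thesis using finite_subset by blast
qed

lemma finite_mins:
  fixes K :: "'a::linorder set"
  shows "finite {e. e \<in> K \<and> (\<forall>x\<in>K. e \<le> x)}"
  by (rule finite_sub1) (auto intro: order.antisym)

lemma finite_maxs:
  fixes K :: "'a::linorder set"
  shows "finite {e. e \<in> K \<and> (\<forall>x\<in>K. x \<le> e)}"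
  by (rule finite_sub1) (auto intro: order.antisym)

lemma ivl_join:
  fixes a b c :: "'a::linorder"
  assumes "{a..b} \<subseteq> A" "{b..c} \<subseteq> A"
  shows "{a..c} \<subseteq> A"
proof
  fix z assume z: "z \<in> {a..c}"
  show "z \<in> A"
  proof (cases "z \<le> b")
    case True thus ?thesis using z assms(1) by auto
  next
    case False thus ?thesis using z assms(2) by auto
  qed
qed

lemma fci_left:
  fixes A :: "'a::{dense_linorder, order_bot, no_top} set"
  assumes "fci A" "j \<in> A"
  shows "\<exists>i\<le>j. {x. x \<le> j \<and> {x..j} \<subseteq> A} = {i..j}"
proof -
  obtain F where F: "finite F" "\<forall>K\<in>F. cinterval K" "A = \<Union>F" using assms(1) unfolding fci_def by blast
  define E where "E = (\<Union>K\<in>F. {e. e \<in> K \<and> (\<forall>x\<in>K. e \<le> x)})"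
  have fE: "finite E" unfolding E_def by (intro finite_UN_I F(1) finite_mins)
  define S where "S = {x. x \<le> j \<and> {x..j} \<subseteq> A}"
  have key: "\<exists>e\<in>S \<inter> E. e \<le> x" if "x \<in> S" for x
  proof -
    from that have "x \<in> A" by (auto simp: S_def)
    then obtain K where K: "K \<in> F" "x \<in> K" using F(3) by blast
    then obtain e where e: "e \<in> K" "\<forall>y\<in>K. e \<le> y" using cinterval_min F(2) by blast
    have "{e..x} \<subseteq> K" using cinterval_convex F(2) K e by blast
    hence "{e..x} \<subseteq> A" using F(3) K by blast
    moreover have "{x..j} \<subseteq> A" "x \<le> j" using that by (auto simp: S_def)
    ultimately have "{e..j} \<subseteq> A" using ivl_join by blast
    moreover have "e \<le> x" using e K by blast
    moreover have "e \<in> E" unfolding E_def using K e by blast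
    ultimately show ?thesis using \<open>x \<le> j\<close> unfolding S_def by force
  qed
  have "j \<in> S" using assms(2) by (auto simp: S_def)
  hence ne: "S \<inter> E \<noteq> {}" using key by blast
  define i where "i = Min (S \<inter> E)"
  have iS: "i \<in> S" using Min_in[OF _ ne] fE unfolding i_def by blast
  have imin: "i \<le> x" if "x \<in> S" for x
    using key[OF that] fE unfolding i_def by (meson Min_le finite_Int order.trans)
  have "S = {i..j}"
  proof
    show "S \<subseteq> {i..j}" using imin by (auto simp: S_def)
    show "{i..j} \<subseteq> S"
    proof
      fix x assume x: "x \<in> {i..j}"
      hence "{x..j} \<subseteq> {i..j}" by auto
      moreover have "{i..j} \<subseteq> A" using iS by (simp add: S_def)
      ultimately have "{x..j} \<subseteq> A" by (rule subset_trans)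
      thus "x \<in> S" using x by (simp add: S_def)
    qed
  qed
  thus ?thesis using iS unfolding S_def by blast
qed

lemma fci_right:
  fixes A :: "'a::{dense_linorder, order_bot, no_top} set"
  assumes "fci A" "i \<in> A"
  shows "(\<exists>j\<ge>i. {y. i \<le> y \<and> {i..y} \<subseteq> A} = {i..j}) \<or> {y. i \<le> y \<and> {i..y} \<subseteq> A} = {i..}"
proof -
  obtain F where F: "finite F" "\<forall>K\<in>F. cinterval K" "A = \<Union>F" using assms(1) unfolding fci_def by blast
  define T where "T = {y. i \<le> y \<and> {i..y} \<subseteq> A}"
  show ?thesis
  proof (cases "\<exists>K\<in>F. (\<exists>e. K = {e..}) \<and> K \<inter> T \<noteq> {}")
    case True
    then obtain K e y where K: "K \<in> F" "K = {e..}" "y \<in> K" "y \<in> T" by blast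
    have "{i..} \<subseteq> A"
    proof
      fix z assume z: "z \<in> {i..}"
      show "z \<in> A"
      proof (cases "z \<le> y")
        case True thus ?thesis using K z by (auto simp: T_def)
      next
        case False
        have "e \<le> y" using K by simp
        hence "z \<in> K" using False K(2) by simp
        thus ?thesis using K(1) F(3) by blast
      qed
    qed
    hence "T = {i..}" by (auto simp: T_def)
    thus ?thesis unfolding T_def by blast
  next
    case False
    define E where "E = (\<Union>K\<in>F. {e. e \<in> K \<and> (\<forall>x\<in>K. x \<le> e)})"
    have fE: "finite E" unfolding E_def by (intro finite_UN_I F(1) finite_maxs)
    have key: "\<exists>f\<in>T \<inter> E. x \<le> f" if "x \<in> T" for x
    proof -
      from that have "x \<in> A" by (auto simp: T_def)
      then obtain K where K: "K \<in> F" "x \<in> K" using F(3) by blast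
      have "\<not> (\<exists>e. K = {e..})" using False K that by blast
      moreover have "cinterval K" using F(2) K by blast
      ultimately obtain e f where ef: "e \<le> f" "K = {e..f}" unfolding cinterval_alt by blast
      have "{x..f} \<subseteq> K" using K ef by auto
      hence "{x..f} \<subseteq> A" using K(1) F(3) by blast
      moreover have "{i..x} \<subseteq> A" "i \<le> x" using that by (auto simp: T_def)
      ultimately have "{i..f} \<subseteq> A" using ivl_join by blast
      moreover have "x \<le> f" using ef K by auto
      moreover have "f \<in> K \<and> (\<forall>y\<in>K. y \<le> f)" using ef by auto
      hence "f \<in> E" unfolding E_def using K(1) by blast
      ultimately show ?thesis using \<open>i \<le> x\<close> unfolding T_def by force
    qed
    have "i \<in> T" using assms(2) by (auto simp: T_def)
    hence ne: "T \<inter> E \<noteq> {}" using key by blast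
    define j where "j = Max (T \<inter> E)"
    have jT: "j \<in> T" using Max_in[OF _ ne] fE unfolding j_def by blast
    have jmax: "x \<le> j" if "x \<in> T" for x
      using key[OF that] fE unfolding j_def by (meson Max_ge finite_Int order.trans)
    have "T = {i..j}"
    proof
      show "T \<subseteq> {i..j}" using jmax by (auto simp: T_def)
      show "{i..j} \<subseteq> T"
      proof
        fix x assume x: "x \<in> {i..j}"
        hence "{i..x} \<subseteq> {i..j}" by auto
        moreover have "{i..j} \<subseteq> A" using jT by (simp add: T_def)
        ultimately have "{i..x} \<subseteq> A" by (rule subset_trans)
        thus "x \<in> T" using x by (simp add: T_def)
      qed
    qed
    thus ?thesis using jT unfolding T_def by blast
  qed
qed

definition Lp :: "'a::linorder set \<Rightarrow> 'a set" where
  "Lp A = {i\<in>A. \<forall>u<i. \<not> {u..i} \<subseteq> A}"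
definition Rp :: "'a::linorder set \<Rightarrow> 'a set" where
  "Rp A = {j\<in>A. \<forall>v>j. \<not> {j..v} \<subseteq> A}"

lemma lend_sub:
  fixes A :: "'a::{dense_linorder, order_bot, no_top} set"
  assumes "i \<in> lend A"
  shows "i \<in> Lp A"
proof -
  obtain K where K: "maxci A K" "i \<in> K" "\<forall>x\<in>K. i \<le> x" using assms unfolding lend_def by blast
  have cK: "cinterval K" and KA: "K \<subseteq> A" using K(1) unfolding maxci_def by auto
  have mx: "\<And>K'. cinterval K' \<Longrightarrow> K \<subseteq> K' \<Longrightarrow> K' \<subseteq> A \<Longrightarrow> K' = K"
    using K(1) unfolding maxci_def by blast
  have "i \<in> A" using K(2) KA by blast
  moreover have "\<not> {u..i} \<subseteq> A" if u: "u < i" for u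
  proof
    assume uA: "{u..i} \<subseteq> A"
    from cK consider (b) a b where "a \<le> b" "K = {a..b}" | (u) a where "K = {a..}"
      unfolding cinterval_alt by blast
    thus False
    proof cases
      case b
      have ai: "a = i" using b K(2,3) by (simp add: order.antisym)
      have "u \<le> b" using u b ai by auto
      hence "cinterval {u..b}" unfolding cinterval_alt by blast
      moreover have "K \<subseteq> {u..b}" using b u ai by auto
      moreover have "{u..b} \<subseteq> A" using ivl_join[OF uA] KA b ai by blast
      ultimately have "{u..b} = K" using mx by blast
      moreover have "u \<in> {u..b}" using u b ai by auto
      ultimately show False using K(3) u by auto
    next
      case u
      have ai: "a = i" using u K(2,3) by (simp add: order.antisym)
      have "cinterval {u..}" unfolding cinterval_alt by auto
      moreover have "K \<subseteq> {u..}" using u \<open>u < i\<close> ai by auto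
      moreover have "{u..} \<subseteq> A"
      proof
        fix z assume z: "z \<in> {u..}"
        show "z \<in> A"
        proof (cases "z \<le> i")
          case True thus ?thesis using z uA by auto
        next
          case False thus ?thesis using KA u ai by auto
        qed
      qed
      ultimately have "{u..} = K" using mx by blast
      hence "u \<in> K" by auto
      thus False using K(3) \<open>u < i\<close> by (meson leD)
    qed
  qed
  ultimately show ?thesis unfolding Lp_def by blast
qed

lemma Lp_sub:
  fixes A :: "'a::{dense_linorder, order_bot, no_top} set"
  assumes "fci A" "i \<in> Lp A"
  shows "i \<in> lend A"
proof -
  have iA: "i \<in> A" and iL: "\<And>u. u < i \<Longrightarrow> \<not> {u..i} \<subseteq> A" using assms(2) unfolding Lp_def by auto
  define T where "T = {y. i \<le> y \<and> {i..y} \<subseteq> A}"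
  have cT: "cinterval T" using fci_right[OF assms(1) iA] unfolding T_def[symmetric] cinterval_alt by blast
  have TA: "T \<subseteq> A" unfolding T_def by auto
  have iT: "i \<in> T" using iA unfolding T_def by auto
  have mx: "K' = T" if "cinterval K'" "T \<subseteq> K'" "K' \<subseteq> A" for K'
  proof
    show "T \<subseteq> K'" by fact
    show "K' \<subseteq> T"
    proof
      fix y assume y: "y \<in> K'"
      have iK: "i \<in> K'" using iT that(2) by blast
      show "y \<in> T"
      proof (cases "y < i")
        case True
        have "{y..i} \<subseteq> K'" using cinterval_convex[OF that(1) y iK] .
        hence "{y..i} \<subseteq> A" using that(3) by blast
        thus ?thesis using iL True by blast
      next
        case False
        have "{i..y} \<subseteq> K'" using cinterval_convex[OF that(1) iK y] .
        hence "{i..y} \<subseteq> A" using that(3) by blast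
        thus ?thesis using False unfolding T_def by simp
      qed
    qed
  qed
  have "maxci A T" unfolding maxci_def using cT TA mx by blast
  moreover have "\<forall>x\<in>T. i \<le> x" unfolding T_def by blast
  ultimately show ?thesis unfolding lend_def using iT by blast
qed

lemma rend_sub:
  fixes A :: "'a::{dense_linorder, order_bot, no_top} set"
  assumes "j \<in> rend A"
  shows "j \<in> Rp A"
proof -
  obtain K where K: "maxci A K" "j \<in> K" "\<forall>x\<in>K. x \<le> j" using assms unfolding rend_def by blast
  have cK: "cinterval K" and KA: "K \<subseteq> A" using K(1) unfolding maxci_def by auto
  have mx: "\<And>K'. cinterval K' \<Longrightarrow> K \<subseteq> K' \<Longrightarrow> K' \<subseteq> A \<Longrightarrow> K' = K"
    using K(1) unfolding maxci_def by blast
  have "j \<in> A" using K(2) KA by blast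
  moreover have "\<not> {j..v} \<subseteq> A" if v: "j < v" for v
  proof
    assume vA: "{j..v} \<subseteq> A"
    from cK consider (b) a b where "a \<le> b" "K = {a..b}" | (u) a where "K = {a..}"
      unfolding cinterval_alt by blast
    thus False
    proof cases
      case b
      have bj: "b = j" using b K(2,3) by (simp add: order.antisym)
      have "a \<le> v" using v b bj by auto
      hence "cinterval {a..v}" unfolding cinterval_alt by blast
      moreover have "K \<subseteq> {a..v}" using b v bj by auto
      moreover have "{a..v} \<subseteq> A" using ivl_join[OF _ vA, of a] KA b bj by blast
      ultimately have "{a..v} = K" using mx by blast
      moreover have "v \<in> {a..v}" using v b bj by auto
      ultimately show False using K(3) v by auto
    next
      case u
      have "j < v" by fact
      moreover have "v \<in> K" using u K(2) v by auto
      ultimately show False using K(3) by auto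
    qed
  qed
  ultimately show ?thesis unfolding Rp_def by blast
qed

lemma Rp_sub:
  fixes A :: "'a::{dense_linorder, order_bot, no_top} set"
  assumes "fci A" "j \<in> Rp A"
  shows "j \<in> rend A"
proof -
  have jA: "j \<in> A" and jR: "\<And>v. j < v \<Longrightarrow> \<not> {j..v} \<subseteq> A" using assms(2) unfolding Rp_def by auto
  define S where "S = {x. x \<le> j \<and> {x..j} \<subseteq> A}"
  have cS: "cinterval S" using fci_left[OF assms(1) jA] unfolding S_def[symmetric] cinterval_alt by blast
  have SA: "S \<subseteq> A" unfolding S_def by auto
  have jS: "j \<in> S" using jA unfolding S_def by auto
  have mx: "K' = S" if "cinterval K'" "S \<subseteq> K'" "K' \<subseteq> A" for K'
  proof
    show "S \<subseteq> K'" by fact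
    show "K' \<subseteq> S"
    proof
      fix y assume y: "y \<in> K'"
      have jK: "j \<in> K'" using jS that(2) by blast
      show "y \<in> S"
      proof (cases "j < y")
        case True
        have "{j..y} \<subseteq> K'" using cinterval_convex[OF that(1) jK y] .
        hence "{j..y} \<subseteq> A" using that(3) by blast
        thus ?thesis using jR True by blast
      next
        case False
        have "{y..j} \<subseteq> K'" using cinterval_convex[OF that(1) y jK] .
        hence "{y..j} \<subseteq> A" using that(3) by blast
        thus ?thesis using False unfolding S_def by simp
      qed
    qed
  qed
  have "maxci A S" unfolding maxci_def using cS SA mx by blast
  moreover have "\<forall>x\<in>S. x \<le> j" unfolding S_def by blast
  ultimately show ?thesis unfolding rend_def using jS by blast
qed

lemma lend_eq: "fci (A::'a::{dense_linorder, order_bot, no_top} set) \<Longrightarrow> lend A = Lp A"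
  using lend_sub Lp_sub by blast

lemma rend_eq: "fci (A::'a::{dense_linorder, order_bot, no_top} set) \<Longrightarrow> rend A = Rp A"
  using rend_sub Rp_sub by blast

lemma sub_ivl:
  fixes a b c d :: "'a::linorder"
  assumes "{a..b} \<subseteq> A" "a \<le> c" "d \<le> b"
  shows "{c..d} \<subseteq> A"
proof -
  have "{c..d} \<subseteq> {a..b}" using assms(2,3) by auto
  thus ?thesis using assms(1) by (rule subset_trans)
qed

lemma pred_ex:
  fixes X :: "'a::linorder set"
  assumes "finite X" "y \<in> X" "k \<in> X" "k < y"
  shows "\<exists>p. succ_in X p y"
proof -
  define p where "p = Max {k\<in>X. k < y}"
  have ne: "{k\<in>X. k < y} \<noteq> {}" using assms by blast
  have fin: "finite {k\<in>X. k < y}" using assms(1) by simp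
  have "p \<in> {k\<in>X. k < y}" unfolding p_def using Max_in[OF fin ne] .
  moreover have "\<forall>k\<in>X. p < k \<longrightarrow> y \<le> k"
  proof (intro ballI impI)
    fix k assume k: "k \<in> X" "p < k"
    show "y \<le> k"
    proof (rule ccontr)
      assume "\<not> y \<le> k"
      hence "k \<in> {k\<in>X. k < y}" using k by simp
      hence "k \<le> p" unfolding p_def using Max_ge[OF fin] by blast
      thus False using k by simp
    qed
  qed
  ultimately have "succ_in X p y" unfolding succ_in_def using assms(2) by simp
  thus ?thesis by blast
qed

lemma succ_ex:
  fixes X :: "'a::linorder set"
  assumes "finite X" "x \<in> X" "k \<in> X" "x < k"
  shows "\<exists>y. succ_in X x y"
proof -
  define y where "y = Min {k\<in>X. x < k}"
  have ne: "{k\<in>X. x < k} \<noteq> {}" using assms by blast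
  have fin: "finite {k\<in>X. x < k}" using assms(1) by simp
  have "y \<in> {k\<in>X. x < k}" unfolding y_def using Min_in[OF fin ne] .
  moreover have "\<forall>k\<in>X. x < k \<longrightarrow> y \<le> k"
  proof (intro ballI impI)
    fix k assume k: "k \<in> X" "x < k"
    hence "k \<in> {k\<in>X. x < k}" by simp
    thus "y \<le> k" unfolding y_def using Min_le[OF fin] by blast
  qed
  ultimately have "succ_in X x y" unfolding succ_in_def using assms(2) by simp
  thus ?thesis by blast
qed

lemma Max_not_ips:
  fixes X :: "'a::linorder set"
  assumes "finite X"
  shows "Max X \<notin> ips X Y"
proof
  assume "Max X \<in> ips X Y"
  then obtain j where "succ_in X (Max X) j" unfolding ips_def by blast
  hence "j \<in> X" "Max X < j" unfolding succ_in_def by auto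
  thus False using Max_ge[OF assms] by (meson leD)
qed

lemma cond_equiv:
  fixes B C :: "'a::linorder set"
  assumes "finite B" "finite C"
  shows "(B \<noteq> {} \<and> {Min (B \<union> C)} \<subseteq> B \<and>
          (({Max (B \<union> C)} \<subseteq> C \<and> ips (B \<union> C) (C - B) = B - C) \<or>
           ({Max (B \<union> C)} \<subseteq> B - C \<and> ips (B \<union> C) (C - B) \<union> {Max (B \<union> C)} = B - C)))
    \<longleftrightarrow> (B \<noteq> {} \<and> Min (B \<union> C) \<in> B \<and> ips (B \<union> C) (C - B) = (B - C) - {Max (B \<union> C)})"
proof (cases "B = {}")
  case True thus ?thesis by simp
next
  case False
  define X where "X = B \<union> C"
  define M where "M = Max X"
  have fX: "finite X" unfolding X_def using assms by simp
  have neX: "X \<noteq> {}" unfolding X_def using False by simp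
  have MX: "M \<in> X" unfolding M_def using Max_in[OF fX neX] .
  have Mi: "M \<notin> ips X (C - B)" unfolding M_def using Max_not_ips[OF fX] .
  have "(({M} \<subseteq> C \<and> ips X (C - B) = B - C) \<or>
           ({M} \<subseteq> B - C \<and> ips X (C - B) \<union> {M} = B - C))
        \<longleftrightarrow> ips X (C - B) = (B - C) - {M}"
  proof
    assume "({M} \<subseteq> C \<and> ips X (C - B) = B - C) \<or>
           ({M} \<subseteq> B - C \<and> ips X (C - B) \<union> {M} = B - C)"
    thus "ips X (C - B) = (B - C) - {M}" using Mi by blast
  next
    assume h: "ips X (C - B) = (B - C) - {M}"
    show "({M} \<subseteq> C \<and> ips X (C - B) = B - C) \<or>
           ({M} \<subseteq> B - C \<and> ips X (C - B) \<union> {M} = B - C)"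
    proof (cases "M \<in> C")
      case True thus ?thesis using h by blast
    next
      case False
      hence "M \<in> B - C" using MX unfolding X_def by blast
      thus ?thesis using h by blast
    qed
  qed
  thus ?thesis unfolding X_def M_def using False by simp
qed

lemma left_end:
  fixes A :: "'a::{dense_linorder, order_bot, no_top} set"
  assumes "fci A" "a \<in> A"
  shows "\<exists>i\<in>Lp A. i \<le> a \<and> {i..a} \<subseteq> A"
proof -
  obtain i where i: "i \<le> a" "{x. x \<le> a \<and> {x..a} \<subseteq> A} = {i..a}" using fci_left[OF assms] by metis
  have "i \<in> {i..a}" using i(1) by simp
  hence "i \<in> {x. x \<le> a \<and> {x..a} \<subseteq> A}" by (simp only: i(2))
  hence ia: "{i..a} \<subseteq> A" by simp
  have "i \<in> A" using ia i(1) by auto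
  moreover have "\<not> {u..i} \<subseteq> A" if u: "u < i" for u
  proof
    assume "{u..i} \<subseteq> A"
    hence "{u..a} \<subseteq> A" using ivl_join[OF _ ia] by blast
    moreover have "u \<le> a" using u i(1) by simp
    ultimately have "u \<in> {x. x \<le> a \<and> {x..a} \<subseteq> A}" by simp
    hence "u \<in> {i..a}" by (simp only: i(2))
    thus False using u by (simp add: not_le[symmetric])
  qed
  ultimately have "i \<in> Lp A" unfolding Lp_def by blast
  thus ?thesis using i(1) ia by blast
qed

lemma dir1:
  fixes A :: "'a::{dense_linorder, order_bot, no_top} set"
  assumes fA: "fci A" and ne: "A \<noteq> {}" and fin: "finite (Lp A)" "finite (Rp A)"
  defines "B \<equiv> Lp A" and "C \<equiv> Rp A"
  shows "B \<noteq> {} \<and> Min (B \<union> C) \<in> B \<and> ips (B \<union> C) (C - B) = (B - C) - {Max (B \<union> C)}"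
proof -
  define X where "X = B \<union> C"
  have fX: "finite X" unfolding X_def B_def C_def using fin by simp
  have BA: "B \<subseteq> A" and CA: "C \<subseteq> A" unfolding B_def C_def Lp_def Rp_def by auto
  obtain a where "a \<in> A" using ne by blast
  then obtain i0 where "i0 \<in> B" using left_end[OF fA] unfolding B_def by blast
  hence Bne: "B \<noteq> {}" by blast
  hence neX: "X \<noteq> {}" unfolding X_def by simp
  have minB: "Min X \<in> B"
  proof -
    have m: "Min X \<in> X" using Min_in[OF fX neX] .
    show ?thesis
    proof (cases "Min X \<in> B")
      case False
      hence "Min X \<in> A" using m CA unfolding X_def by blast
      then obtain i where i: "i \<in> B" "i \<le> Min X" using left_end[OF fA] unfolding B_def by blast
      have "Min X \<le> i" using i(1) Min_le[OF fX] unfolding X_def by blast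
      hence "i = Min X" using i(2) by simp
      thus ?thesis using i(1) by simp
    qed simp
  qed
  have ips: "ips X (C - B) = (B - C) - {Max X}"
  proof
    show "ips X (C - B) \<subseteq> (B - C) - {Max X}"
    proof
      fix x assume "x \<in> ips X (C - B)"
      then obtain y where xy: "succ_in X x y" "y \<in> C - B" unfolding ips_def by blast
      have xX: "x \<in> X" and yX: "y \<in> X" and xy_lt: "x < y" and sx: "\<forall>k\<in>X. x < k \<longrightarrow> y \<le> k"
        using xy(1) unfolding succ_in_def by auto
      have "y \<in> A" using xy(2) CA by blast
      then obtain i where i: "i \<in> B" "i \<le> y" "{i..y} \<subseteq> A" using left_end[OF fA] unfolding B_def by blast
      have "i \<noteq> y" using i(1) xy(2) by blast
      hence "i < y" using i(2) by simp
      have "i \<le> x"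
      proof (rule ccontr)
        assume "\<not> i \<le> x"
        hence "x < i" by simp
        hence "y \<le> i" using sx i(1) unfolding X_def by blast
        thus False using \<open>i < y\<close> by simp
      qed
      hence "{x..y} \<subseteq> {i..y}" by auto
      hence "{x..y} \<subseteq> A" using i(3) by (rule subset_trans)
      hence "x \<notin> C" using xy_lt unfolding C_def Rp_def by blast
      hence "x \<in> B" using xX unfolding X_def by blast
      moreover have "x \<noteq> Max X" using Max_ge[OF fX yX] xy_lt by auto
      ultimately show "x \<in> (B - C) - {Max X}" using \<open>x \<notin> C\<close> by blast
    qed
    show "(B - C) - {Max X} \<subseteq> ips X (C - B)"
    proof
      fix x assume x: "x \<in> (B - C) - {Max X}"
      have xA: "x \<in> A" using x BA by blast
      have xX: "x \<in> X" using x unfolding X_def by blast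
      have "x \<notin> Rp A" using x unfolding C_def by blast
      then obtain v where v: "x < v" "{x..v} \<subseteq> A" using xA unfolding Rp_def by blast
      define T where "T = {y. x \<le> y \<and> {x..y} \<subseteq> A}"
      from fci_right[OF fA xA] consider (b) j where "x \<le> j" "T = {x..j}" | (u) "T = {x..}"
        unfolding T_def[symmetric] by blast
      thus "x \<in> ips X (C - B)"
      proof cases
        case u
        define M where "M = Max X"
        have MX: "M \<in> X" unfolding M_def using Max_in[OF fX neX] .
        have "x \<le> M" unfolding M_def using Max_ge[OF fX xX] .
        hence xM: "x < M" using x unfolding M_def by auto
        have "M \<in> T" using u xM by simp
        hence "{x..M} \<subseteq> A" unfolding T_def by simp
        hence "M \<notin> B" using xM unfolding B_def Lp_def by blast
        moreover have "M \<notin> C"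
        proof
          assume "M \<in> C"
          obtain w where w: "M < w" using gt_ex by blast
          have "w \<in> T" using u w xM by simp
          hence "{x..w} \<subseteq> A" unfolding T_def by simp
          hence "{M..w} \<subseteq> A" using xM sub_ivl[of x w A M w] by (metis less_imp_le order.refl)
          thus False using \<open>M \<in> C\<close> w unfolding C_def Rp_def by blast
        qed
        ultimately show ?thesis using MX unfolding X_def by blast
      next
        case b
        have "v \<in> T" using v unfolding T_def by simp
        hence "v \<le> j" using b by simp
        hence xj: "x < j" using v by simp
        have "j \<in> T" using b by simp
        hence xjA: "{x..j} \<subseteq> A" unfolding T_def by simp
        hence jA: "j \<in> A" using xj by auto
        have jB: "j \<notin> B" using xjA xj unfolding B_def Lp_def by blast
        have jC: "j \<in> C"
        proof -
          have "\<not> {j..v'} \<subseteq> A" if v': "j < v'" for v'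
          proof
            assume "{j..v'} \<subseteq> A"
            hence "{x..v'} \<subseteq> A" using ivl_join xjA by blast
            hence "v' \<in> T" unfolding T_def using xj v' by simp
            hence "v' \<le> j" using b by simp
            thus False using v' by (simp add: not_le[symmetric])
          qed
          thus ?thesis using jA unfolding C_def Rp_def by blast
        qed
        have "succ_in X x j"
          unfolding succ_in_def
        proof (intro conjI ballI impI)
          show "x \<in> X" by fact
          show "j \<in> X" using jC unfolding X_def by blast
          show "x < j" by fact
          fix k assume k: "k \<in> X" "x < k"
          show "j \<le> k"
          proof (rule ccontr)
            assume "\<not> j \<le> k"
            hence kj: "k < j" by simp
            have "{x..k} \<subseteq> A" using xjA kj sub_ivl[of x j A x k] by (metis less_imp_le order.refl)
            hence "k \<notin> B" using k(2) unfolding B_def Lp_def by blast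
            moreover have "{k..j} \<subseteq> A" using xjA k(2) sub_ivl[of x j A k j] by (metis less_imp_le order.refl)
            hence "k \<notin> C" using kj unfolding C_def Rp_def by blast
            ultimately show False using k(1) unfolding X_def by blast
          qed
        qed
        thus ?thesis unfolding ips_def using xX jC jB by blast
      qed
    qed
  qed
  show ?thesis using Bne minB ips unfolding X_def by blast
qed

definition nxt :: "'a::linorder set \<Rightarrow> 'a \<Rightarrow> 'a" where
  "nxt X x = Min {k\<in>X. x < k}"

definition Iv :: "'a::linorder set \<Rightarrow> 'a set \<Rightarrow> 'a \<Rightarrow> 'a set" where
  "Iv X C x = (if x \<in> C then {x..x} else if (\<exists>k\<in>X. x < k) then {x..nxt X x} else {x..})"

lemma nxt_props:
  fixes X :: "'a::linorder set"
  assumes "finite X" "k \<in> X" "x < k"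
  shows "nxt X x \<in> X" "x < nxt X x" "\<And>k'. k' \<in> X \<Longrightarrow> x < k' \<Longrightarrow> nxt X x \<le> k'"
proof -
  have ne: "{k\<in>X. x < k} \<noteq> {}" using assms by blast
  have fin: "finite {k\<in>X. x < k}" using assms(1) by simp
  have "nxt X x \<in> {k\<in>X. x < k}" unfolding nxt_def using Min_in[OF fin ne] .
  thus "nxt X x \<in> X" "x < nxt X x" by auto
  fix k' assume "k' \<in> X" "x < k'"
  hence "k' \<in> {k\<in>X. x < k}" by simp
  thus "nxt X x \<le> k'" unfolding nxt_def using Min_le[OF fin] by blast
qed

lemma Iv_mem:
  fixes X :: "'a::linorder set"
  assumes "finite X"
  shows "z \<in> Iv X C x \<longleftrightarrow> (x \<le> z \<and> (x \<in> C \<longrightarrow> z = x) \<and> (\<forall>k\<in>X. x < k \<longrightarrow> z \<le> k))"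
proof (cases "x \<in> C")
  case True
  thus ?thesis unfolding Iv_def by (auto simp: order.antisym)
next
  case nC: False
  show ?thesis
  proof (cases "\<exists>k\<in>X. x < k")
    case True
    then obtain k where k: "k \<in> X" "x < k" by blast
    note n = nxt_props[OF assms k]
    have "z \<in> Iv X C x \<longleftrightarrow> x \<le> z \<and> z \<le> nxt X x" unfolding Iv_def using nC True by simp
    also have "\<dots> \<longleftrightarrow> (x \<le> z \<and> (\<forall>k\<in>X. x < k \<longrightarrow> z \<le> k))"
      using n by (meson order.trans)
    finally show ?thesis using nC by simp
  next
    case False
    thus ?thesis unfolding Iv_def using nC by auto
  qed
qed

lemma Iv_cint:
  fixes X :: "'a::{linorder, order_bot} set"
  assumes "finite X"
  shows "cinterval (Iv X C x)"
proof (cases "x \<in> C")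
  case True
  have "x \<le> x \<and> Iv X C x = {x..x}" unfolding Iv_def using True by simp
  thus ?thesis unfolding cinterval_alt by blast
next
  case nC: False
  show ?thesis
  proof (cases "\<exists>k\<in>X. x < k")
    case True
    then obtain k where k: "k \<in> X" "x < k" by blast
    have "x \<le> nxt X x" using nxt_props(2)[OF assms k] by simp
    thus ?thesis unfolding Iv_def cinterval_alt using nC True by auto
  next
    case False thus ?thesis unfolding Iv_def cinterval_alt using nC by auto
  qed
qed

lemma dense_above:
  fixes X :: "'a::dense_linorder set"
  assumes "finite X" "j < v"
  shows "\<exists>z. j < z \<and> z < v \<and> (\<forall>k\<in>X. j < k \<longrightarrow> z < k)"
proof -
  define m where "m = Min (insert v {k\<in>X. j < k})"
  have fin: "finite (insert v {k\<in>X. j < k})" using assms(1) by simp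
  have "m \<in> insert v {k\<in>X. j < k}" unfolding m_def using Min_in[OF fin] by blast
  hence jm: "j < m" using assms(2) by auto
  then obtain z where z: "j < z" "z < m" using dense by blast
  have "m \<le> v" unfolding m_def using Min_le[OF fin] by blast
  moreover have "\<forall>k\<in>X. j < k \<longrightarrow> m \<le> k" unfolding m_def using Min_le[OF fin] by blast
  ultimately show ?thesis using z by (meson order.strict_trans2)
qed

lemma dense_below:
  fixes X :: "'a::dense_linorder set"
  assumes "finite X" "u < x"
  shows "\<exists>z. u < z \<and> z < x \<and> (\<forall>k\<in>X. k < x \<longrightarrow> k < z)"
proof -
  define m where "m = Max (insert u {k\<in>X. k < x})"
  have fin: "finite (insert u {k\<in>X. k < x})" using assms(1) by simp
  have "m \<in> insert u {k\<in>X. k < x}" unfolding m_def using Max_in[OF fin] by blast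
  hence jm: "m < x" using assms(2) by auto
  then obtain z where z: "m < z" "z < x" using dense by blast
  have "u \<le> m" unfolding m_def using Max_ge[OF fin] by blast
  moreover have "\<forall>k\<in>X. k < x \<longrightarrow> k \<le> m" unfolding m_def using Max_ge[OF fin] by blast
  ultimately show ?thesis using z by (meson order.strict_trans1)
qed

lemma dir2:
  fixes B C :: "'a::{dense_linorder, order_bot, no_top} set"
  assumes fB: "finite B" and fC: "finite C" and Bne: "B \<noteq> {}" and minB: "Min (B \<union> C) \<in> B"
      and ipsc: "ips (B \<union> C) (C - B) = (B - C) - {Max (B \<union> C)}"
  shows "\<exists>A. fci A \<and> A \<noteq> {} \<and> lend A = B \<and> rend A = C"
proof -
  define X where "X = B \<union> C"
  have fX: "finite X" unfolding X_def using fB fC by simp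
  have neX: "X \<noteq> {}" unfolding X_def using Bne by simp
  have BX: "B \<subseteq> X" and CX: "C \<subseteq> X" unfolding X_def by auto
  have ips: "ips X (C - B) = (B - C) - {Max X}" using ipsc unfolding X_def .
  have minX: "Min X \<in> B" using minB unfolding X_def .
  define A where "A = \<Union>(Iv X C ` B)"
  define P where "P x z \<longleftrightarrow> x \<le> z \<and> (x \<in> C \<longrightarrow> z = x) \<and> (\<forall>k\<in>X. x < k \<longrightarrow> z \<le> k)" for x z
  have memA: "z \<in> A \<longleftrightarrow> (\<exists>x\<in>B. P x z)" for z
    unfolding A_def P_def using Iv_mem[OF fX] by blast
  have conv: "P x w" if "P x z" "x \<le> w" "w \<le> z" for x z w
    using that unfolding P_def by (meson order.trans order.antisym)
  have Pxx: "P x x" for x unfolding P_def by auto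
  have fA: "fci A" unfolding fci_def A_def
    using Iv_cint[OF fX] fB by blast
  have Ane: "A \<noteq> {}" using Bne memA Pxx by blast
  have ivlA: "{a..b} \<subseteq> A" if "x \<in> B" "P x b" "x \<le> a" for x a b
  proof
    fix w assume "w \<in> {a..b}"
    hence "P x w" using conv[OF that(2)] that(3) by auto
    thus "w \<in> A" using memA that(1) by blast
  qed
  have MaxX: "k \<le> Max X" if "k \<in> X" for k using Max_ge[OF fX that] .
  have L: "Lp A = B"
  proof
    show "Lp A \<subseteq> B"
    proof
      fix i assume i: "i \<in> Lp A"
      hence "i \<in> A" and iL: "\<And>u. u < i \<Longrightarrow> \<not> {u..i} \<subseteq> A" unfolding Lp_def by auto
      then obtain x where x: "x \<in> B" "P x i" using memA by blast
      show "i \<in> B"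
      proof (cases "x = i")
        case True thus ?thesis using x by simp
      next
        case False
        hence "x < i" using x(2) unfolding P_def by auto
        moreover have "{x..i} \<subseteq> A" using ivlA[OF x] by simp
        ultimately show ?thesis using iL by blast
      qed
    qed
    show "B \<subseteq> Lp A"
    proof
      fix x assume xB: "x \<in> B"
      have xA: "x \<in> A" using memA xB Pxx by blast
      have "\<not> {u..x} \<subseteq> A" if u: "u < x" for u
      proof
        assume uA: "{u..x} \<subseteq> A"
        obtain z where z: "u < z" "z < x" "\<forall>k\<in>X. k < x \<longrightarrow> k < z" using dense_below[OF fX u] by blast
        have "z \<in> {u..x}" using z(1,2) by (simp add: less_imp_le)
        hence "z \<in> A" using uA by blast
        then obtain x' where x': "x' \<in> B" "P x' z" using memA by blast
        have x'z: "x' \<le> z" using x'(2) unfolding P_def by simp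
        hence x'x: "x' < x" using z(2) by simp
        hence x'z2: "x' < z" using z(3) x'(1) BX by blast
        have x'C: "x' \<notin> C" using x'(2) x'z2 unfolding P_def by auto
        have "x' \<noteq> Max X" using MaxX[of x] xB BX x'x by auto
        hence "x' \<in> ips X (C - B)" using ips x'(1) x'C by blast
        then obtain y where y: "succ_in X x' y" "y \<in> C - B" unfolding ips_def by blast
        have yX: "y \<in> X" and x'y: "x' < y" and sy: "\<forall>k\<in>X. x' < k \<longrightarrow> y \<le> k"
          using y(1) unfolding succ_in_def by auto
        have "y \<le> x" using sy xB BX x'x by blast
        moreover have "\<not> y < x"
        proof
          assume "y < x"
          hence "y < z" using z(3) yX by blast
          moreover have "z \<le> y" using x'(2) yX x'y unfolding P_def by blast
          ultimately show False by simp
        qed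
        ultimately have "y = x" by simp
        thus False using y(2) xB by blast
      qed
      thus "x \<in> Lp A" unfolding Lp_def using xA by blast
    qed
  qed
  have R: "Rp A = C"
  proof
    show "Rp A \<subseteq> C"
    proof
      fix j assume j: "j \<in> Rp A"
      hence "j \<in> A" and jR: "\<And>v. j < v \<Longrightarrow> \<not> {j..v} \<subseteq> A" unfolding Rp_def by auto
      then obtain x where x: "x \<in> B" "P x j" using memA by blast
      have xj: "x \<le> j" using x(2) unfolding P_def by simp
      show "j \<in> C"
      proof (cases "x \<in> C")
        case True thus ?thesis using x(2) unfolding P_def by simp
      next
        case xC: False
        show ?thesis
        proof (cases "\<exists>k\<in>X. x < k")
          case True
          then obtain k where k: "k \<in> X" "x < k" by blast
          have "x \<noteq> Max X" using MaxX[OF k(1)] k(2) by auto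
          hence "x \<in> ips X (C - B)" using ips x(1) xC by blast
          then obtain y where y: "succ_in X x y" "y \<in> C - B" unfolding ips_def by blast
          have yX: "y \<in> X" and xy: "x < y" and sy: "\<forall>k\<in>X. x < k \<longrightarrow> y \<le> k"
            using y(1) unfolding succ_in_def by auto
          have jy: "j \<le> y" using x(2) yX xy unfolding P_def by blast
          have "\<not> j < y"
          proof
            assume jy2: "j < y"
            have "P x y" unfolding P_def using xy xC sy by auto
            hence "{j..y} \<subseteq> A" using ivlA[OF x(1)] xj by blast
            thus False using jR jy2 by blast
          qed
          hence "j = y" using jy by simp
          thus ?thesis using y(2) by simp
        next
          case False
          obtain w where w: "j < w" using gt_ex by blast
          have "P x w" unfolding P_def using False xC xj w by auto
          hence "{j..w} \<subseteq> A" using ivlA[OF x(1)] xj by blast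
          thus ?thesis using jR w by blast
        qed
      qed
    qed
    show "C \<subseteq> Rp A"
    proof
      fix j assume jC: "j \<in> C"
      have jA: "j \<in> A"
      proof (cases "j \<in> B")
        case True thus ?thesis using memA Pxx by blast
      next
        case False
        have jX: "j \<in> X" using jC CX by blast
        have mX: "Min X \<in> X" using Min_in[OF fX neX] .
        have "Min X \<le> j" using Min_le[OF fX jX] .
        moreover have "Min X \<noteq> j" using minX False by blast
        ultimately have "Min X < j" by simp
        then obtain p where p: "succ_in X p j" using pred_ex[OF fX jX mX] by blast
        hence "p \<in> ips X (C - B)" unfolding ips_def succ_in_def using jC False by blast
        hence pB: "p \<in> B" and pC: "p \<notin> C" using ips by auto
        have "P p j" using p pC unfolding succ_in_def P_def by auto
        thus ?thesis using memA pB by blast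
      qed
      have "\<not> {j..v} \<subseteq> A" if v: "j < v" for v
      proof
        assume jv: "{j..v} \<subseteq> A"
        obtain z where z: "j < z" "z < v" "\<forall>k\<in>X. j < k \<longrightarrow> z < k" using dense_above[OF fX v] by blast
        have "z \<in> {j..v}" using z(1,2) by (simp add: less_imp_le)
        hence "z \<in> A" using jv by blast
        then obtain x' where x': "x' \<in> B" "P x' z" using memA by blast
        have x'z: "x' \<le> z" using x'(2) unfolding P_def by simp
        have "\<not> j < x'" using z(3) x'(1) BX x'z by (meson leD subsetD)
        moreover have "x' \<noteq> j" using x'(2) jC z(1) unfolding P_def by auto
        moreover have "\<not> x' < j" using x'(2) jC CX z(1) unfolding P_def by (meson leD subsetD)
        ultimately show False by simp
      qed
      thus "j \<in> Rp A" unfolding Rp_def using jA by blast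
    qed
  qed
  show ?thesis using fA Ane L R lend_eq rend_eq by metis
qed

theorem lemma6p1:
  fixes B C :: "'a::{dense_linorder, order_bot, no_top} set"
  assumes "finite B" and "finite C"
  shows "(\<exists>A. fci A \<and> A \<noteq> {} \<and> lend A = B \<and> rend A = C) \<longleftrightarrow>
         (B \<noteq> {} \<and> {Min (B \<union> C)} \<subseteq> B \<and>
          (({Max (B \<union> C)} \<subseteq> C \<and> ips (B \<union> C) (C - B) = B - C) \<or>
           ({Max (B \<union> C)} \<subseteq> B - C \<and> ips (B \<union> C) (C - B) \<union> {Max (B \<union> C)} = B - C)))"
  unfolding cond_equiv[OF assms]
proof
  assume "\<exists>A. fci A \<and> A \<noteq> {} \<and> lend A = B \<and> rend A = C"
  then obtain A where A: "fci A" "A \<noteq> {}" "lend A = B" "rend A = C" by blast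
  have "Lp A = B" "Rp A = C" using A lend_eq rend_eq by auto
  thus "B \<noteq> {} \<and> Min (B \<union> C) \<in> B \<and> ips (B \<union> C) (C - B) = B - C - {Max (B \<union> C)}"
    using dir1[OF A(1,2)] assms by auto
next
  assume "B \<noteq> {} \<and> Min (B \<union> C) \<in> B \<and> ips (B \<union> C) (C - B) = B - C - {Max (B \<union> C)}"
  thus "\<exists>A. fci A \<and> A \<noteq> {} \<and> lend A = B \<and> rend A = C" using dir2[OF assms] by blast
qed

end
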